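(* Let $(X_{1,\infty},f_{1,\infty})$ be a topological nonautonomous dynamical system, $\mathcal{U}_{1,\infty}\in\mathcal{L}(X_{1,\infty})$, and assume that $f_{1,\infty}$ is equicontinuous. Then for each $m\ge1$ the sequence $\mathcal{V}_{1,\infty}$ defined by $\mathcal{V}_n:=\bigvee_{i=0}^{m-1}f_n^{-i}\mathcal{U}_{n+i}$ is an element of $\mathcal{L}(X_{1,\infty})$.
   Context: Topological NDS: compact metric spaces $(X_n,\varrho_n)$ and continuous maps $f_n:X_n\to X_{n+1}$; $f_n^i=f_{n+i-1}\circ\cdots\circ f_n$, $f_n^0=\mathrm{id}$, $f_n^{-i}\mathcal{U}=\{(f_n^i)^{-1}(U):U\in\mathcal{U}\}$; the join of covers consists of all intersections of one member from each. Equicontinuity: for every $\varepsilon>0$ there is $\delta>0$ with $\varrho_{n+1}(f_nx,f_ny)<\varepsilon$ whenever $\varrho_n(x,y)<\delta$, uniformly in $n$. The Lebesgue number of an open cover of a compact metric space is the maximal $\varepsilon>0$ such that every $\varepsilon$-ball lies in a member of the cover. $\mathcal{L}(X_{1,\infty})$ is the family of sequences $\{\mathcal{U}_n\}$, $\mathcal{U}_n$ an open cover of $X_n$, whose Lebesgue numbers are bounded away from zero uniformly in $n$. *)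

theory Defs
  imports "HOL-Analysis.Analysis"
begin

definition is_NDS ::
  "(nat \<Rightarrow> 'a set) \<Rightarrow> (nat \<Rightarrow> 'a \<Rightarrow> 'a \<Rightarrow> real) \<Rightarrow> (nat \<Rightarrow> 'a \<Rightarrow> 'a) \<Rightarrow> bool" where
  "is_NDS X d f \<longleftrightarrow>
     (\<forall>n. Metric_space (X n) (d n)
        \<and> compact_space (Metric_space.mtopology (X n) (d n))
        \<and> continuous_map (Metric_space.mtopology (X n) (d n))
                          (Metric_space.mtopology (X (Suc n)) (d (Suc n))) (f n))"

text \<open>f_n^i = f_{n+i-1} o ... o f_n, f_n^0 = id\<close>
fun fiter :: "(nat \<Rightarrow> 'a \<Rightarrow> 'a) \<Rightarrow> nat \<Rightarrow> nat \<Rightarrow> 'a \<Rightarrow> 'a" where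
  "fiter f n 0 = id"
| "fiter f n (Suc i) = f (n + i) \<circ> fiter f n i"

definition preimage_cover ::
  "(nat \<Rightarrow> 'a set) \<Rightarrow> (nat \<Rightarrow> 'a \<Rightarrow> 'a) \<Rightarrow> nat \<Rightarrow> nat \<Rightarrow> 'a set set \<Rightarrow> 'a set set" where
  "preimage_cover X f n i \<U> = {{x \<in> X n. fiter f n i x \<in> U} | U. U \<in> \<U>}"

definition join_covers :: "nat \<Rightarrow> (nat \<Rightarrow> 'a set set) \<Rightarrow> 'a set set" where
  "join_covers m C = {(\<Inter>i\<in>{..<m}. g i) | g. \<forall>i<m. g i \<in> C i}"

definition open_cover :: "'a topology \<Rightarrow> 'a set set \<Rightarrow> bool" where
  "open_cover T \<U> \<longleftrightarrow> (\<forall>U\<in>\<U>. openin T U) \<and> \<Union>\<U> = topspace T"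

definition lebesgue_ok :: "'a set \<Rightarrow> ('a \<Rightarrow> 'a \<Rightarrow> real) \<Rightarrow> 'a set set \<Rightarrow> real \<Rightarrow> bool" where
  "lebesgue_ok M d \<U> \<epsilon> \<longleftrightarrow> (\<forall>x\<in>M. \<exists>U\<in>\<U>. Metric_space.mball M d x \<epsilon> \<subseteq> U)"

definition Lcovers ::
  "(nat \<Rightarrow> 'a set) \<Rightarrow> (nat \<Rightarrow> 'a \<Rightarrow> 'a \<Rightarrow> real) \<Rightarrow> (nat \<Rightarrow> 'a set set) set" where
  "Lcovers X d = {\<U>. (\<forall>n. open_cover (Metric_space.mtopology (X n) (d n)) (\<U> n))
                     \<and> (\<exists>\<epsilon>>0. \<forall>n. lebesgue_ok (X n) (d n) (\<U> n) \<epsilon>)}"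

definition equicontinuous_NDS ::
  "(nat \<Rightarrow> 'a set) \<Rightarrow> (nat \<Rightarrow> 'a \<Rightarrow> 'a \<Rightarrow> real) \<Rightarrow> (nat \<Rightarrow> 'a \<Rightarrow> 'a) \<Rightarrow> bool" where
  "equicontinuous_NDS X d f \<longleftrightarrow>
     (\<forall>\<epsilon>>0. \<exists>\<delta>>0. \<forall>n. \<forall>x\<in>X n. \<forall>y\<in>X n.
        d n x y < \<delta> \<longrightarrow> d (Suc n) (f n x) (f n y) < \<epsilon>)"

end

theory Submission
  imports Defs
begin

lemma fiter_cont:
  assumes "is_NDS X d f"
  shows "continuous_map (Metric_space.mtopology (X n) (d n))
           (Metric_space.mtopology (X (n+i)) (d (n+i))) (fiter f n i)"
proof (induction i)
  case 0 then show ?case by simp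
next
  case (Suc i)
  have "continuous_map (Metric_space.mtopology (X (n+i)) (d (n+i)))
          (Metric_space.mtopology (X (Suc (n+i))) (d (Suc (n+i)))) (f (n+i))"
    using assms unfolding is_NDS_def by blast
  then have "continuous_map (Metric_space.mtopology (X n) (d n))
          (Metric_space.mtopology (X (Suc (n+i))) (d (Suc (n+i)))) (f (n+i) \<circ> fiter f n i)"
    by (rule continuous_map_compose[OF Suc.IH])
  then show ?case by (metis add_Suc_right fiter.simps(2))
qed

lemma fiter_in:
  assumes "is_NDS X d f" "x \<in> X n"
  shows "fiter f n i x \<in> X (n+i)"
proof -
  have M: "Metric_space (X k) (d k)" for k using assms unfolding is_NDS_def by blast
  have "x \<in> topspace (Metric_space.mtopology (X n) (d n))"
    using Metric_space.topspace_mtopology[OF M] assms(2) by simp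
  then have "fiter f n i x \<in> topspace (Metric_space.mtopology (X (n+i)) (d (n+i)))"
    using fiter_cont[OF assms(1), of n i] unfolding continuous_map_def by blast
  then show ?thesis using Metric_space.topspace_mtopology[OF M] by simp
qed

lemma fiter_equi:
  assumes "is_NDS X d f" "equicontinuous_NDS X d f"
  shows "\<forall>e>0. \<exists>\<delta>>0. \<forall>n. \<forall>x\<in>X n. \<forall>y\<in>X n.
            d n x y < \<delta> \<longrightarrow> d (n+i) (fiter f n i x) (fiter f n i y) < e"
proof (induction i)
  case 0 then show ?case by auto
next
  case (Suc i)
  show ?case
  proof (intro allI impI)
    fix e :: real assume "e > 0"
    then obtain \<delta>1 where d1: "\<delta>1 > 0" "\<forall>n. \<forall>x\<in>X n. \<forall>y\<in>X n.
        d n x y < \<delta>1 \<longrightarrow> d (Suc n) (f n x) (f n y) < e"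
      using assms(2) unfolding equicontinuous_NDS_def by blast
    then obtain \<delta> where d: "\<delta> > 0" "\<forall>n. \<forall>x\<in>X n. \<forall>y\<in>X n.
            d n x y < \<delta> \<longrightarrow> d (n+i) (fiter f n i x) (fiter f n i y) < \<delta>1"
      using Suc by blast
    show "\<exists>\<delta>>0. \<forall>n. \<forall>x\<in>X n. \<forall>y\<in>X n.
            d n x y < \<delta> \<longrightarrow> d (n+Suc i) (fiter f n (Suc i) x) (fiter f n (Suc i) y) < e"
    proof (intro exI[of _ \<delta>] conjI allI ballI impI)
      fix n x y assume xy: "x \<in> X n" "y \<in> X n" "d n x y < \<delta>"
      have "d (n+i) (fiter f n i x) (fiter f n i y) < \<delta>1" using d xy by blast
      moreover have "fiter f n i x \<in> X (n+i)" "fiter f n i y \<in> X (n+i)"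
        using fiter_in[OF assms(1)] xy by auto
      ultimately show "d (n+Suc i) (fiter f n (Suc i) x) (fiter f n (Suc i) y) < e"
        using d1(2) by simp
    qed (use d in auto)
  qed
qed

lemma fiter_equi_unif:
  assumes "is_NDS X d f" "equicontinuous_NDS X d f" "e > 0"
  shows "\<exists>\<delta>>0. \<forall>i<k. \<forall>n. \<forall>x\<in>X n. \<forall>y\<in>X n.
            d n x y < \<delta> \<longrightarrow> d (n+i) (fiter f n i x) (fiter f n i y) < e"
proof (induction k)
  case 0 then show ?case by (intro exI[of _ 1]) auto
next
  case (Suc k)
  then obtain \<delta>1 where a: "\<delta>1 > 0" "\<forall>i<k. \<forall>n. \<forall>x\<in>X n. \<forall>y\<in>X n.
            d n x y < \<delta>1 \<longrightarrow> d (n+i) (fiter f n i x) (fiter f n i y) < e" by blast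
  obtain \<delta>2 where b: "\<delta>2 > 0" "\<forall>n. \<forall>x\<in>X n. \<forall>y\<in>X n.
            d n x y < \<delta>2 \<longrightarrow> d (n+k) (fiter f n k x) (fiter f n k y) < e"
    using fiter_equi[OF assms(1,2), of k] assms(3) by blast
  show ?case
  proof (intro exI[of _ "min \<delta>1 \<delta>2"] conjI allI impI ballI)
    fix i n x y assume i: "i < Suc k" and xy: "x \<in> X n" "y \<in> X n" "d n x y < min \<delta>1 \<delta>2"
    show "d (n+i) (fiter f n i x) (fiter f n i y) < e"
    proof (cases "i = k")
      case True then show ?thesis using b(2) xy by simp
    next
      case False then have "i < k" using i by simp
      then show ?thesis using a(2) xy by simp
    qed
  qed (use a b in simp)
qed

theorem mainTheorem13:
  fixes X :: "nat \<Rightarrow> 'a set" and d :: "nat \<Rightarrow> 'a \<Rightarrow> 'a \<Rightarrow> real"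
    and f :: "nat \<Rightarrow> 'a \<Rightarrow> 'a" and \<U> :: "nat \<Rightarrow> 'a set set" and m :: nat
  assumes "is_NDS X d f"
    and "\<U> \<in> Lcovers X d"
    and "equicontinuous_NDS X d f"
    and "m \<ge> 1"
  shows "(\<lambda>n. join_covers m (\<lambda>i. preimage_cover X f n i (\<U> (n + i)))) \<in> Lcovers X d"
proof -
  have M: "Metric_space (X k) (d k)" for k using assms(1) unfolding is_NDS_def by blast
  have top: "topspace (Metric_space.mtopology (X k) (d k)) = X k" for k
    using M Metric_space.topspace_mtopology by metis
  have oc: "\<And>n. open_cover (Metric_space.mtopology (X n) (d n)) (\<U> n)"
    and "\<exists>\<epsilon>>0. \<forall>n. lebesgue_ok (X n) (d n) (\<U> n) \<epsilon>"
    using assms(2) unfolding Lcovers_def by auto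
  then obtain e where e: "e > 0" "\<And>n. lebesgue_ok (X n) (d n) (\<U> n) e" by blast
  obtain \<delta> where dl: "\<delta> > 0" "\<forall>i<m. \<forall>n. \<forall>x\<in>X n. \<forall>y\<in>X n.
            d n x y < \<delta> \<longrightarrow> d (n+i) (fiter f n i x) (fiter f n i y) < e"
    using fiter_equi_unif[OF assms(1,3) e(1)] by blast
  have opencov: "open_cover (Metric_space.mtopology (X n) (d n))
          (join_covers m (\<lambda>i. preimage_cover X f n i (\<U> (n + i))))" for n
    unfolding open_cover_def
  proof
    show "\<forall>V\<in>join_covers m (\<lambda>i. preimage_cover X f n i (\<U> (n + i))).
            openin (Metric_space.mtopology (X n) (d n)) V"
    proof
      fix V assume "V \<in> join_covers m (\<lambda>i. preimage_cover X f n i (\<U> (n + i)))"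
      then obtain g where g: "V = (\<Inter>i\<in>{..<m}. g i)"
        "\<forall>i<m. g i \<in> preimage_cover X f n i (\<U> (n + i))"
        unfolding join_covers_def by blast
      have "openin (Metric_space.mtopology (X n) (d n)) (g i)" if im: "i < m" for i
      proof -
        obtain U where U: "U \<in> \<U> (n+i)" "g i = {x \<in> X n. fiter f n i x \<in> U}"
          using g(2) im unfolding preimage_cover_def by blast
        have "openin (Metric_space.mtopology (X (n+i)) (d (n+i))) U"
          using oc[of "n+i"] U(1) unfolding open_cover_def by blast
        from openin_continuous_map_preimage[OF fiter_cont[OF assms(1)] this]
        show ?thesis using U(2) top by simp
      qed
      then show "openin (Metric_space.mtopology (X n) (d n)) V"
        unfolding g(1) using assms(4) by (intro openin_INT2) (auto simp: lessThan_empty_iff)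
    qed
  next
    show "\<Union> (join_covers m (\<lambda>i. preimage_cover X f n i (\<U> (n + i)))) =
          topspace (Metric_space.mtopology (X n) (d n))"
    proof
      show "\<Union> (join_covers m (\<lambda>i. preimage_cover X f n i (\<U> (n + i)))) \<subseteq>
          topspace (Metric_space.mtopology (X n) (d n))"
      proof
        fix x assume "x \<in> \<Union> (join_covers m (\<lambda>i. preimage_cover X f n i (\<U> (n + i))))"
        then obtain g where g: "x \<in> (\<Inter>i\<in>{..<m}. g i)"
          "\<forall>i<m. g i \<in> preimage_cover X f n i (\<U> (n + i))"
          unfolding join_covers_def by blast
        have "0 < m" using assms(4) by simp
        then have "x \<in> g 0" using g(1) by auto
        then show "x \<in> topspace (Metric_space.mtopology (X n) (d n))"
          using g(2) \<open>0 < m\<close> top unfolding preimage_cover_def by auto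
      qed
    next
      show "topspace (Metric_space.mtopology (X n) (d n)) \<subseteq>
          \<Union> (join_covers m (\<lambda>i. preimage_cover X f n i (\<U> (n + i))))"
      proof
        fix x assume "x \<in> topspace (Metric_space.mtopology (X n) (d n))"
        then have x: "x \<in> X n" using top by simp
        have "\<forall>i. \<exists>U. i < m \<longrightarrow> U \<in> \<U> (n+i) \<and> fiter f n i x \<in> U"
        proof
          fix i
          have "fiter f n i x \<in> X (n+i)" using fiter_in[OF assms(1) x] .
          then show "\<exists>U. i < m \<longrightarrow> U \<in> \<U> (n+i) \<and> fiter f n i x \<in> U"
            using oc[of "n+i"] top unfolding open_cover_def by blast
        qed
        then obtain G where G: "\<And>i. i < m \<Longrightarrow> G i \<in> \<U> (n+i) \<and> fiter f n i x \<in> G i"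
          by metis
        define g where "g i = {y \<in> X n. fiter f n i y \<in> G i}" for i
        have "(\<Inter>i\<in>{..<m}. g i) \<in> join_covers m (\<lambda>i. preimage_cover X f n i (\<U> (n + i)))"
          unfolding join_covers_def preimage_cover_def g_def using G by blast
        moreover have "x \<in> (\<Inter>i\<in>{..<m}. g i)" using G x unfolding g_def by auto
        ultimately show "x \<in> \<Union> (join_covers m (\<lambda>i. preimage_cover X f n i (\<U> (n + i))))"
          by blast
      qed
    qed
  qed
  have leb: "lebesgue_ok (X n) (d n) (join_covers m (\<lambda>i. preimage_cover X f n i (\<U> (n + i)))) \<delta>" for n
    unfolding lebesgue_ok_def
  proof
    fix x assume x: "x \<in> X n"
    have "\<forall>i. \<exists>U. i < m \<longrightarrow> U \<in> \<U> (n+i) \<and>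
             Metric_space.mball (X (n+i)) (d (n+i)) (fiter f n i x) e \<subseteq> U"
      using e(2) fiter_in[OF assms(1) x] unfolding lebesgue_ok_def by blast
    then obtain G where G: "\<And>i. i < m \<Longrightarrow> G i \<in> \<U> (n+i) \<and>
             Metric_space.mball (X (n+i)) (d (n+i)) (fiter f n i x) e \<subseteq> G i"
      by metis
    define g where "g i = {y \<in> X n. fiter f n i y \<in> G i}" for i
    have "(\<Inter>i\<in>{..<m}. g i) \<in> join_covers m (\<lambda>i. preimage_cover X f n i (\<U> (n + i)))"
      unfolding join_covers_def preimage_cover_def g_def using G by blast
    moreover have "Metric_space.mball (X n) (d n) x \<delta> \<subseteq> (\<Inter>i\<in>{..<m}. g i)"
    proof
      fix y assume "y \<in> Metric_space.mball (X n) (d n) x \<delta>"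
      then have y: "y \<in> X n" "d n x y < \<delta>" using Metric_space.in_mball[OF M] by auto
      show "y \<in> (\<Inter>i\<in>{..<m}. g i)"
      proof
        fix i assume i: "i \<in> {..<m}"
        have "d (n+i) (fiter f n i x) (fiter f n i y) < e" using dl(2) i x y by blast
        then have "fiter f n i y \<in> Metric_space.mball (X (n+i)) (d (n+i)) (fiter f n i x) e"
          using Metric_space.in_mball[OF M] fiter_in[OF assms(1)] x y by auto
        then show "y \<in> g i" using G[of i] i y unfolding g_def by auto
      qed
    qed
    ultimately show "\<exists>U\<in>join_covers m (\<lambda>i. preimage_cover X f n i (\<U> (n + i))).
            Metric_space.mball (X n) (d n) x \<delta> \<subseteq> U" by blast
  qed
  have "\<exists>\<epsilon>>0. \<forall>n. lebesgue_ok (X n) (d n) (join_covers m (\<lambda>i. preimage_cover X f n i (\<U> (n + i)))) \<epsilon>"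
    using leb dl(1) by (intro exI[of _ \<delta>]) simp
  then show ?thesis unfolding Lcovers_def using opencov by simp
qed

end
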